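(* Let $\phi:X\to Y$ be a continuous surjection from a compact metric space $X$ onto a compact Hausdorff space $Y$. Then $\phi$ is almost one-to-one if and only if $\phi$ is both almost open and weakly almost one-to-one.
   Context: $\phi$ is almost open if $\phi(U)$ has nonempty interior in $Y$ for every nonempty open $U\subset X$. Let $Y_0=\{y\in Y:\phi^{-1}(y)\text{ is a singleton}\}$. $\phi$ is weakly almost one-to-one if $Y_0$ is dense in $Y$, and almost one-to-one if $X_0=\phi^{-1}(Y_0)$ is dense in $X$. *)

theory Defs
  imports "HOL-Analysis.Analysis"
begin

definition almost_open :: "'a topology \<Rightarrow> 'b topology \<Rightarrow> ('a \<Rightarrow> 'b) \<Rightarrow> bool" where
  "almost_open X Y phi \<longleftrightarrow>
     (\<forall>U. openin X U \<and> U \<noteq> {} \<longrightarrow> Y interior_of (phi ` U) \<noteq> {})"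

definition singleton_fibres :: "'a topology \<Rightarrow> 'b topology \<Rightarrow> ('a \<Rightarrow> 'b) \<Rightarrow> 'b set" where
  "singleton_fibres X Y phi =
     {y \<in> topspace Y. is_singleton {x \<in> topspace X. phi x = y}}"

definition weakly_almost_one_to_one :: "'a topology \<Rightarrow> 'b topology \<Rightarrow> ('a \<Rightarrow> 'b) \<Rightarrow> bool" where
  "weakly_almost_one_to_one X Y phi \<longleftrightarrow>
     Y closure_of (singleton_fibres X Y phi) = topspace Y"

definition almost_one_to_one :: "'a topology \<Rightarrow> 'b topology \<Rightarrow> ('a \<Rightarrow> 'b) \<Rightarrow> bool" where
  "almost_one_to_one X Y phi \<longleftrightarrow>
     X closure_of {x \<in> topspace X. phi x \<in> singleton_fibres X Y phi} = topspace X"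

end

theory Submission
  imports Defs
begin

theorem proposition2p3:
  fixes S :: "'a::metric_space set" and Y :: "'b topology" and phi :: "'a \<Rightarrow> 'b"
  assumes "compact S"
    and "compact_space Y" and "Hausdorff_space Y"
    and "continuous_map (top_of_set S) Y phi"
    and "phi ` S = topspace Y"
  shows "almost_one_to_one (top_of_set S) Y phi \<longleftrightarrow>
         almost_open (top_of_set S) Y phi \<and> weakly_almost_one_to_one (top_of_set S) Y phi"
proof -
  let ?TX = "top_of_set S :: 'a topology"
  let ?Y0 = "singleton_fibres ?TX Y phi"
  let ?Xz = "{x \<in> S. phi x \<in> ?Y0}"
  have tsX: "topspace ?TX = S" by simp
  have cX: "compact_space ?TX"
    using assms(1) by (simp add: compact_space_subtopology compactin_euclidean_iff)
  have cm: "closed_map ?TX Y phi"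
    by (rule continuous_imp_closed_map_gen[OF cX _ assms(4)])
       (simp add: Hausdorff_imp_kc_space assms(3))
  have fib: "\<And>x w. x \<in> S \<Longrightarrow> phi x \<in> ?Y0 \<Longrightarrow> w \<in> S \<Longrightarrow> phi w = phi x \<Longrightarrow> w = x"
  proof -
    fix x w assume h: "x \<in> S" "phi x \<in> ?Y0" "w \<in> S" "phi w = phi x"
    then obtain z where z: "{v \<in> S. phi v = phi x} = {z}"
      unfolding singleton_fibres_def is_singleton_def by auto
    have "x \<in> {v \<in> S. phi v = phi x}" "w \<in> {v \<in> S. phi v = phi x}" using h by auto
    thus "w = x" using z by (metis singletonD)
  qed
  show ?thesis
  proof
    assume a: "almost_one_to_one ?TX Y phi"
    hence d: "?TX closure_of ?Xz = S" by (simp add: almost_one_to_one_def)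
    have "almost_open ?TX Y phi"
      unfolding almost_open_def
    proof (intro allI impI)
      fix U assume U: "openin ?TX U \<and> U \<noteq> {}"
      then obtain x where x: "x \<in> U" "x \<in> ?Xz"
        using d dense_intersects_open[of ?TX ?Xz] by (auto simp del: mem_Collect_eq)
      have US: "U \<subseteq> S" using U openin_subset by fastforce
      have "closedin ?TX (S - U)" using U by (metis closedin_diff closedin_topspace tsX)
      hence cl: "closedin Y (phi ` (S - U))" using cm closed_map_def by blast
      let ?V = "topspace Y - phi ` (S - U)"
      have oV: "openin Y ?V" using cl by blast
      have "phi x \<notin> phi ` (S - U)"
      proof
        assume "phi x \<in> phi ` (S - U)"
        then obtain w where w: "w \<in> S - U" "phi w = phi x" using imageE by metis
        hence "w = x" using fib[of x w] x by auto
        thus False using w x by auto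
      qed
      hence "phi x \<in> ?V" using x assms(5) by auto
      moreover have "?V \<subseteq> phi ` U" using assms(5) by auto
      ultimately have "phi x \<in> Y interior_of (phi ` U)"
        using oV interior_of_maximal by blast
      thus "Y interior_of (phi ` U) \<noteq> {}" by blast
    qed
    moreover have "weakly_almost_one_to_one ?TX Y phi"
    proof -
      have "phi ` (?TX closure_of ?Xz) \<subseteq> Y closure_of (phi ` ?Xz)"
        by (rule continuous_map_image_closure_subset[OF assms(4)])
      also have "\<dots> \<subseteq> Y closure_of ?Y0" by (rule closure_of_mono) auto
      finally have "topspace Y \<subseteq> Y closure_of ?Y0" using d assms(5) by simp
      thus ?thesis unfolding weakly_almost_one_to_one_def
        using closure_of_subset_topspace[of Y ?Y0] by (rule subset_antisym[rotated])
    qed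
    ultimately show "almost_open ?TX Y phi \<and> weakly_almost_one_to_one ?TX Y phi" by blast
  next
    assume a: "almost_open ?TX Y phi \<and> weakly_almost_one_to_one ?TX Y phi"
    have dY: "\<And>T. openin Y T \<Longrightarrow> T \<noteq> {} \<Longrightarrow> ?Y0 \<inter> T \<noteq> {}"
    proof -
      fix T assume "openin Y T" "T \<noteq> {}"
      moreover have "Y closure_of ?Y0 = topspace Y"
        using a unfolding weakly_almost_one_to_one_def by blast
      ultimately show "?Y0 \<inter> T \<noteq> {}" using dense_intersects_open[of Y ?Y0] by blast
    qed
    have "\<forall>U. openin ?TX U \<and> U \<noteq> {} \<longrightarrow> ?Xz \<inter> U \<noteq> {}"
    proof (intro allI impI)
      fix U assume U: "openin ?TX U \<and> U \<noteq> {}"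
      have US: "U \<subseteq> S" using U openin_subset by fastforce
      have "Y interior_of (phi ` U) \<noteq> {}" using a U unfolding almost_open_def by blast
      moreover have "openin Y (Y interior_of (phi ` U))" by simp
      ultimately have "?Y0 \<inter> (Y interior_of (phi ` U)) \<noteq> {}" using dY by blast
      then obtain y where y: "y \<in> ?Y0" "y \<in> Y interior_of (phi ` U)"
        by blast
      hence "y \<in> phi ` U" using interior_of_subset[of Y "phi ` U"] by blast
      then obtain w where w: "w \<in> U" "phi w = y"
        by blast
      hence "w \<in> ?Xz" using US y by auto
      thus "?Xz \<inter> U \<noteq> {}" using w by blast
    qed
    thus "almost_one_to_one ?TX Y phi"
      unfolding almost_one_to_one_def
      using dense_intersects_open[of ?TX ?Xz] by (simp del: mem_Collect_eq)
  qed
qed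

end
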